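(* Let $k$ be an algebraically closed field of characteristic $0$, let $f$ be a nonconstant endomorphism of $\mathbb{P}^n_k$, and let $H\subset\mathbb{P}^n$ be a hypersurface. If every irreducible component of $H$ contains a (nonempty) preperiodic subvariety, then $H$ is dynamically improper under $f$.
   Context: An endomorphism of $\mathbb{P}^n$ is a morphism given by homogeneous forms of a common degree with no common nontrivial zero. A nonempty subvariety $X\subset\mathbb{P}^n$ is preperiodic under $f$ if for every irreducible component $Z$ of $X$ there exist distinct nonnegative integers $s,t$ with $f^s(Z)=f^t(Z)$. A hypersurface $H$ is improper under $f$ if for every irreducible component $Z$ of $H$ there exist integers $0\le i_0<\dots<i_n$ with $f^{i_0}(Z)\cap\dots\cap f^{i_n}(Z)\neq\varnothing$; it is dynamically improper under $f$ if it is improper under $f^r$ for every $r>0$. *)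

theory Defs
  imports Main "HOL-Computational_Algebra.Polynomial" "HOL-Library.Poly_Mapping"
begin

type_synonym 'k mpoly = "(nat \<Rightarrow>\<^sub>0 nat) \<Rightarrow>\<^sub>0 'k"

definition mpeval :: "'k::comm_ring_1 mpoly \<Rightarrow> (nat \<Rightarrow> 'k) \<Rightarrow> 'k" where
  "mpeval p x = (\<Sum>m\<in>Poly_Mapping.keys p. Poly_Mapping.lookup p m * (\<Prod>i\<in>Poly_Mapping.keys m. x i ^ Poly_Mapping.lookup m i))"

definition hpoly :: "nat \<Rightarrow> nat \<Rightarrow> 'k::comm_ring_1 mpoly \<Rightarrow> bool" where
  "hpoly n d p \<longleftrightarrow> (\<forall>m\<in>Poly_Mapping.keys p. Poly_Mapping.keys m \<subseteq> {..n} \<and> (\<Sum>i\<in>Poly_Mapping.keys m. Poly_Mapping.lookup m i) = d)"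

definition nzvec :: "nat \<Rightarrow> (nat \<Rightarrow> 'k::field) \<Rightarrow> bool" where
  "nzvec n x \<longleftrightarrow> (\<forall>i>n. x i = 0) \<and> x \<noteq> (\<lambda>_. 0)"

definition pline :: "(nat \<Rightarrow> 'k::field) \<Rightarrow> (nat \<Rightarrow> 'k) set" where
  "pline x = {(\<lambda>i. c * x i) | c. c \<noteq> 0}"

definition Pn :: "nat \<Rightarrow> (nat \<Rightarrow> 'k::field) set set" where
  "Pn n = pline ` {x. nzvec n x}"

definition zero_locus :: "nat \<Rightarrow> 'k::field mpoly set \<Rightarrow> (nat \<Rightarrow> 'k) set set" where
  "zero_locus n S = {P \<in> Pn n. \<forall>g\<in>S. \<forall>x\<in>P. mpeval g x = 0}"

definition zclosed :: "nat \<Rightarrow> (nat \<Rightarrow> 'k::field) set set \<Rightarrow> bool" where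
  "zclosed n X \<longleftrightarrow> (\<exists>S. (\<forall>g\<in>S. \<exists>d. hpoly n d g) \<and> X = zero_locus n S)"

definition zirreducible :: "nat \<Rightarrow> (nat \<Rightarrow> 'k::field) set set \<Rightarrow> bool" where
  "zirreducible n X \<longleftrightarrow> zclosed n X \<and> X \<noteq> {} \<and>
     (\<forall>A B. zclosed n A \<longrightarrow> zclosed n B \<longrightarrow> X \<subseteq> A \<union> B \<longrightarrow> X \<subseteq> A \<or> X \<subseteq> B)"

definition irr_component :: "nat \<Rightarrow> (nat \<Rightarrow> 'k::field) set set \<Rightarrow> (nat \<Rightarrow> 'k) set set \<Rightarrow> bool" where
  "irr_component n X Z \<longleftrightarrow> Z \<subseteq> X \<and> zirreducible n Z \<and>
     (\<forall>W. zirreducible n W \<longrightarrow> Z \<subseteq> W \<longrightarrow> W \<subseteq> X \<longrightarrow> W = Z)"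

definition subvariety :: "nat \<Rightarrow> (nat \<Rightarrow> 'k::field) set set \<Rightarrow> bool" where
  "subvariety n X \<longleftrightarrow> zclosed n X \<and> X \<noteq> {}"

definition hypersurface :: "nat \<Rightarrow> (nat \<Rightarrow> 'k::field) set set \<Rightarrow> bool" where
  "hypersurface n H \<longleftrightarrow> (\<exists>g d. d > 0 \<and> g \<noteq> 0 \<and> hpoly n d g \<and> H = zero_locus n {g})"

definition endomorphism :: "nat \<Rightarrow> nat \<Rightarrow> (nat \<Rightarrow> 'k::field mpoly) \<Rightarrow> bool" where
  "endomorphism n d F \<longleftrightarrow> (\<forall>i\<le>n. hpoly n d (F i)) \<and>
     (\<forall>x. (\<forall>i>n. x i = 0) \<longrightarrow> (\<forall>i\<le>n. mpeval (F i) x = 0) \<longrightarrow> x = (\<lambda>_. 0))"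

text \<open>The induced map on points of P^n (well defined by homogeneity)\<close>
definition pt_map :: "nat \<Rightarrow> (nat \<Rightarrow> 'k::field mpoly) \<Rightarrow> (nat \<Rightarrow> 'k) set \<Rightarrow> (nat \<Rightarrow> 'k) set" where
  "pt_map n F P = pline (\<lambda>i. if i \<le> n then mpeval (F i) (SOME x. x \<in> P) else 0)"

definition preperiodic :: "nat \<Rightarrow> ((nat \<Rightarrow> 'k::field) set \<Rightarrow> (nat \<Rightarrow> 'k) set) \<Rightarrow> (nat \<Rightarrow> 'k) set set \<Rightarrow> bool" where
  "preperiodic n f X \<longleftrightarrow> subvariety n X \<and>
     (\<forall>Z. irr_component n X Z \<longrightarrow> (\<exists>s t. s \<noteq> t \<and> (f ^^ s) ` Z = (f ^^ t) ` Z))"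

definition improper :: "nat \<Rightarrow> ((nat \<Rightarrow> 'k::field) set \<Rightarrow> (nat \<Rightarrow> 'k) set) \<Rightarrow> (nat \<Rightarrow> 'k) set set \<Rightarrow> bool" where
  "improper n f H \<longleftrightarrow> (\<forall>Z. irr_component n H Z \<longrightarrow>
     (\<exists>i::nat \<Rightarrow> nat. (\<forall>j<n. i j < i (Suc j)) \<and> (\<Inter>j\<le>n. (f ^^ i j) ` Z) \<noteq> {}))"

definition dyn_improper :: "nat \<Rightarrow> ((nat \<Rightarrow> 'k::field) set \<Rightarrow> (nat \<Rightarrow> 'k) set) \<Rightarrow> (nat \<Rightarrow> 'k) set set \<Rightarrow> bool" where
  "dyn_improper n f H \<longleftrightarrow> (\<forall>r>0. improper n (f ^^ r) H)"

end

theory Submission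
  imports Defs
begin

definition zcl :: "nat \<Rightarrow> (nat \<Rightarrow> 'k::field) set set \<Rightarrow> (nat \<Rightarrow> 'k) set set" where
  "zcl n U = zero_locus n {g. (\<exists>d. hpoly n d g) \<and> (\<forall>Q\<in>U. \<forall>x\<in>Q. mpeval g x = 0)}"

lemma zcl_closed: "zclosed n (zcl n U)"
  unfolding zclosed_def zcl_def by (rule exI[where x="{g. (\<exists>d. hpoly n d g) \<and> (\<forall>Q\<in>U. \<forall>x\<in>Q. mpeval g x = 0)}"]) auto

lemma zclosed_sub: "zclosed n A \<Longrightarrow> A \<subseteq> Pn n"
  unfolding zclosed_def zero_locus_def by blast

lemma zcl_sup: "U \<subseteq> Pn n \<Longrightarrow> U \<subseteq> zcl n U"
  unfolding zcl_def zero_locus_def by blast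

lemma zcl_least: assumes "zclosed n A" "U \<subseteq> A" shows "zcl n U \<subseteq> A"
proof -
  obtain S where S: "\<forall>g\<in>S. \<exists>d. hpoly n d g" "A = zero_locus n S"
    using assms(1) unfolding zclosed_def by blast
  have "S \<subseteq> {g. (\<exists>d. hpoly n d g) \<and> (\<forall>Q\<in>U. \<forall>x\<in>Q. mpeval g x = 0)}"
    using S assms(2) unfolding zero_locus_def by blast
  then show ?thesis unfolding zcl_def S(2) zero_locus_def by blast
qed

lemma zcl_point_irr: assumes "P \<in> Pn n" shows "zirreducible n (zcl n {P})"
  unfolding zirreducible_def
proof (intro conjI allI impI)
  show "zclosed n (zcl n {P})" by (rule zcl_closed)
  show "zcl n {P} \<noteq> {}" using zcl_sup[of "{P}" n] assms by auto
  fix A B assume A: "zclosed n A" and B: "zclosed n B" and s: "zcl n {P} \<subseteq> A \<union> B"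
  have "P \<in> A \<or> P \<in> B" using s zcl_sup[of "{P}" n] assms by auto
  then show "zcl n {P} \<subseteq> A \<or> zcl n {P} \<subseteq> B"
    using zcl_least[OF A, of "{P}"] zcl_least[OF B, of "{P}"] by auto
qed

lemma irrD: "zirreducible n W \<Longrightarrow> zclosed n A \<Longrightarrow> zclosed n B \<Longrightarrow> W \<subseteq> A \<union> B \<Longrightarrow> W \<subseteq> A \<or> W \<subseteq> B"
  unfolding zirreducible_def by blast

lemma irr_closed: "zirreducible n W \<Longrightarrow> zclosed n W"
  unfolding zirreducible_def by simp

lemma irr_ne: "zirreducible n W \<Longrightarrow> W \<noteq> {}"
  unfolding zirreducible_def by simp

lemma zcl_chain_irr:
  assumes C: "C \<noteq> {}" "chain\<^sub>\<subseteq> C" "\<forall>W\<in>C. zirreducible n W"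
  shows "zirreducible n (zcl n (\<Union>C))"
  unfolding zirreducible_def
proof (intro conjI allI impI)
  have sub: "\<Union>C \<subseteq> Pn n"
  proof
    fix x assume "x \<in> \<Union>C"
    then obtain W where "W \<in> C" "x \<in> W" by blast
    then show "x \<in> Pn n" using zclosed_sub[OF irr_closed] C(3) by blast
  qed
  show "zclosed n (zcl n (\<Union>C))" by (rule zcl_closed)
  obtain W where "W \<in> C" using C(1) by blast
  then have "W \<noteq> {}" using C(3) irr_ne by blast
  then show "zcl n (\<Union>C) \<noteq> {}" using zcl_sup[OF sub] \<open>W \<in> C\<close> by blast
  fix A B assume A: "zclosed n A" and B: "zclosed n B" and s: "zcl n (\<Union>C) \<subseteq> A \<union> B"
  have each: "\<forall>W\<in>C. W \<subseteq> A \<or> W \<subseteq> B"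
  proof
    fix W assume "W \<in> C"
    then have "W \<subseteq> A \<union> B" using s zcl_sup[OF sub] by blast
    moreover have "zirreducible n W" using C(3) \<open>W \<in> C\<close> by blast
    ultimately show "W \<subseteq> A \<or> W \<subseteq> B" using irrD A B by blast
  qed
  show "zcl n (\<Union>C) \<subseteq> A \<or> zcl n (\<Union>C) \<subseteq> B"
  proof (cases "\<forall>W\<in>C. W \<subseteq> A")
    case True
    then have "\<Union>C \<subseteq> A" by (simp add: Sup_le_iff)
    then show ?thesis using zcl_least[OF A] by simp
  next
    case False
    then obtain W0 where W0: "W0 \<in> C" "\<not> W0 \<subseteq> A" by blast
    have "\<forall>W\<in>C. W \<subseteq> B"
    proof
      fix W assume "W \<in> C"
      then have "W \<subseteq> W0 \<or> W0 \<subseteq> W" using C(2) W0(1) unfolding chain_subset_def by simp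
      moreover have "W0 \<subseteq> A \<or> W0 \<subseteq> B" using each W0(1) by (rule bspec)
      then have "W0 \<subseteq> B" using W0(2) by simp
      moreover have "W \<subseteq> A \<or> W \<subseteq> B" using each \<open>W \<in> C\<close> by (rule bspec)
      ultimately show "W \<subseteq> B" using W0(2) by (meson subset_trans)
    qed
    then have "\<Union>C \<subseteq> B" by (simp add: Sup_le_iff)
    then show ?thesis using zcl_least[OF B] by simp
  qed
qed

lemma exists_component:
  assumes X: "zclosed n X" and P: "P \<in> X"
  shows "\<exists>W. irr_component n X W"
proof -
  have XP: "X \<subseteq> Pn n" using zclosed_sub[OF X] .
  have PP: "P \<in> Pn n" using XP P by (rule subsetD)
  define W0 where "W0 = zcl n {P}"
  define A where "A = {W. zirreducible n W \<and> W0 \<subseteq> W \<and> W \<subseteq> X}"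
  have "{P} \<subseteq> X" using P by simp
  then have "W0 \<subseteq> X" unfolding W0_def by (rule zcl_least[OF X])
  then have W0A: "W0 \<in> A" unfolding A_def W0_def
    using zcl_point_irr[OF PP] by simp
  have "\<forall>C\<in>chains A. \<exists>U\<in>A. \<forall>Y\<in>C. Y \<subseteq> U"
  proof
    fix C assume Cc: "C \<in> chains A"
    show "\<exists>U\<in>A. \<forall>Y\<in>C. Y \<subseteq> U"
    proof (cases "C = {}")
      case True then show ?thesis using W0A by auto
    next
      case False
      have CA: "C \<subseteq> A" and ch: "chain\<^sub>\<subseteq> C" using Cc unfolding chains_def by simp_all
      have irrC: "\<forall>W\<in>C. zirreducible n W" using CA unfolding A_def by auto
      have irr: "zirreducible n (zcl n (\<Union>C))"
        by (rule zcl_chain_irr[OF False ch irrC])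
      have CX: "\<Union>C \<subseteq> X" using CA unfolding A_def by auto
      have sub: "\<Union>C \<subseteq> Pn n" using CX XP by (rule subset_trans)
      have cX: "zcl n (\<Union>C) \<subseteq> X" using zcl_least[OF X CX] .
      have sup: "\<Union>C \<subseteq> zcl n (\<Union>C)" by (rule zcl_sup[OF sub])
      obtain Y0 where Y0: "Y0 \<in> C" using False by auto
      then have "W0 \<subseteq> Y0" using CA unfolding A_def by auto
      moreover have "Y0 \<subseteq> \<Union>C" using Y0 by auto
      ultimately have "W0 \<subseteq> zcl n (\<Union>C)" using sup by auto
      then have "zcl n (\<Union>C) \<in> A" using irr cX unfolding A_def by simp
      moreover have "\<forall>Y\<in>C. Y \<subseteq> zcl n (\<Union>C)" using sup by auto
      ultimately show ?thesis by (rule bexI[rotated])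
    qed
  qed
  then obtain M where M: "M \<in> A" "\<forall>Y\<in>A. M \<subseteq> Y \<longrightarrow> Y = M"
    using Zorn_Lemma2[of A] by auto
  have "irr_component n X M"
    unfolding irr_component_def
  proof (intro conjI allI impI)
    show "M \<subseteq> X" using M(1) unfolding A_def by simp
    show "zirreducible n M" using M(1) unfolding A_def by simp
    fix W assume "zirreducible n W" "M \<subseteq> W" "W \<subseteq> X"
    moreover have "W0 \<subseteq> M" using M(1) unfolding A_def by simp
    ultimately have "W \<in> A" unfolding A_def by auto
    then show "W = M" using M(2) \<open>M \<subseteq> W\<close> by simp
  qed
  then show ?thesis by (rule exI)
qed

lemma img_add: fixes f :: "'a \<Rightarrow> 'a" shows "(f ^^ (a + b)) ` W = (f ^^ a) ` ((f ^^ b) ` W)"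
  by (simp add: funpow_add image_comp)

lemma periodic_img:
  fixes f :: "'a \<Rightarrow> 'a"
  assumes "(f ^^ s) ` W = (f ^^ (s + p)) ` W"
  shows "(f ^^ (s + m + k * p)) ` W = (f ^^ (s + m)) ` W"
proof (induction k)
  case 0 then show ?case by simp
next
  case (Suc k)
  have "(f ^^ (s + m + Suc k * p)) ` W = (f ^^ (m + k * p)) ` ((f ^^ (s + p)) ` W)"
    by (metis img_add add.commute add.left_commute mult_Suc)
  also have "\<dots> = (f ^^ (m + k * p)) ` ((f ^^ s) ` W)" using assms by simp
  also have "\<dots> = (f ^^ (s + m + k * p)) ` W"
    by (metis img_add add.commute add.left_commute)
  finally show ?case using Suc by simp
qed

theorem mainTheorem7:
  fixes n d :: nat
    and F :: "nat \<Rightarrow> 'k::{alg_closed_field, field_char_0} mpoly"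
    and H :: "(nat \<Rightarrow> 'k) set set"
  assumes "endomorphism n d F"
    and "d \<ge> 1"
    and "hypersurface n H"
    and "\<forall>Z. irr_component n H Z \<longrightarrow>
           (\<exists>X. X \<subseteq> Z \<and> preperiodic n (pt_map n F) X)"
  shows "dyn_improper n (pt_map n F) H"
  unfolding dyn_improper_def improper_def
proof (intro allI impI)
  fix r :: nat and Z
  assume r: "r > 0" and Zc: "irr_component n H Z"
  define f where "f = pt_map n F"
  obtain X where XZ: "X \<subseteq> Z" and pre: "preperiodic n f X"
    using assms(4) Zc unfolding f_def by blast
  have Xc: "zclosed n X" and Xne: "X \<noteq> {}"
    using pre unfolding preperiodic_def subvariety_def by auto
  obtain P where "P \<in> X" using Xne by blast
  obtain W where Wc: "irr_component n X W" using exists_component[OF Xc \<open>P \<in> X\<close>] by blast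
  have WX: "W \<subseteq> X" and "zirreducible n W"
    using Wc unfolding irr_component_def by simp_all
  then have Wne: "W \<noteq> {}" unfolding zirreducible_def by simp
  have "\<exists>s t. s \<noteq> t \<and> (f ^^ s) ` W = (f ^^ t) ` W"
    using pre Wc unfolding preperiodic_def by simp
  then obtain s t where st: "s \<noteq> t" "(f ^^ s) ` W = (f ^^ t) ` W"
    by blast
  obtain a p where ap: "p > 0" "(f ^^ a) ` W = (f ^^ (a + p)) ` W"
  proof (cases "s < t")
    case True
    then have "s + (t - s) = t" by simp
    then show ?thesis using that[of "t - s" s] st True by simp
  next
    case False then have "t < s" using st(1) by simp
    then have "t + (s - t) = s" by simp
    then show ?thesis using that[of "s - t" t] st \<open>t < s\<close> by simp
  qed
  define i where "i = (\<lambda>j::nat. a + j * p)"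
  have mono: "\<forall>j<n. i j < i (Suc j)" unfolding i_def using ap(1) by simp
  have eq: "(f ^^ (r * i j)) ` W = (f ^^ (r * a)) ` W" for j
  proof -
    have ra: "a \<le> r * a" using r by simp
    have "r * i j = r * a + (r * j) * p"
      unfolding i_def by (simp add: algebra_simps)
    also have "\<dots> = a + (r * a - a) + (r * j) * p" using ra by simp
    finally have "r * i j = a + (r * a - a) + (r * j) * p" .
    moreover have "r * a = a + (r * a - a)" using ra by simp
    ultimately show ?thesis using periodic_img[OF ap(2), of "r * a - a" "r * j"] by simp
  qed
  have "(f ^^ (r * a)) ` W \<subseteq> (\<Inter>j\<le>n. ((f ^^ r) ^^ i j) ` Z)"
  proof
    fix y assume y: "y \<in> (f ^^ (r * a)) ` W"
    show "y \<in> (\<Inter>j\<le>n. ((f ^^ r) ^^ i j) ` Z)"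
    proof
      fix j assume "j \<in> {..n}"
      have "y \<in> (f ^^ (r * i j)) ` W" using y eq by simp
      then show "y \<in> ((f ^^ r) ^^ i j) ` Z" using WX XZ by (auto simp: funpow_mult)
    qed
  qed
  moreover have "(f ^^ (r * a)) ` W \<noteq> {}" using Wne by simp
  ultimately have ne: "(\<Inter>j\<le>n. ((f ^^ r) ^^ i j) ` Z) \<noteq> {}" by auto
  have "(\<forall>j<n. i j < i (Suc j)) \<and> (\<Inter>j\<le>n. ((pt_map n F ^^ r) ^^ i j) ` Z) \<noteq> {}"
    using mono ne unfolding f_def by simp
  then show "\<exists>i::nat \<Rightarrow> nat. (\<forall>j<n. i j < i (Suc j)) \<and>
        (\<Inter>j\<le>n. ((pt_map n F ^^ r) ^^ i j) ` Z) \<noteq> {}"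
    by (rule exI[where x=i])
qed

end
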